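(* Let $\mathcal{X}\subseteq\mathbb{R}^n$, let $f=(f_1,\dots,f_m):\mathcal{X}\to\mathbb{R}^m$, let $\alpha\in\mathbb{R}^m$, and define \[ \mathcal{F}=\{f(x)\mid x\in\mathcal{X}\},\qquad \mathcal{G}=\Bigl\{\frac{f(x)}{\sum_{i=1}^m\alpha_if_i(x)}\Bigm| x\in\mathcal{X}\Bigr\}. \] Assume $\mathcal{F}$ and $\mathcal{G}$ are nonempty and there is $\epsilon>0$ with $\sum_{i=1}^m\alpha_if_i(x)>\epsilon$ for all $x\in\mathcal{X}$. Then: (i) If $\mathcal{F}$ is bounded, then $\operatorname{conv}(\mathcal{G})=\{g\in\mathbb{R}^m\mid \exists\rho\ge0 \text{ with } g\in\rho\operatorname{conv}(\mathcal{F}),\ \alpha^\top g=1\}$. (ii) If $\mathcal{F}$ is bounded and in addition $f_1(x)=1$ for all $x\in\mathcal{X}$, then $\operatorname{conv}(\mathcal{F})=\{f\in\mathbb{R}^m\mid \exists\sigma\ge0\text{ with } f\in\sigma\operatorname{conv}(\mathcal{G}),\ f_1=1\}$. (iii) (Without assuming boundedness of $\mathcal{F}$.) $\operatorname{cl}\operatorname{conv}(\mathcal{G})=\{g\in\mathbb{R}^m\mid\exists\rho\ge0\text{ with } g\in\rho\operatorname{cl}\operatorname{conv}(\mathcal{F}),\ \alpha^\top g=1\}$.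
   Context: For a set $K$ and $\lambda\ge0$: $\lambda K=\{\lambda k\mid k\in K\}$ if $\lambda>0$, and $0K$ denotes the recession cone of $K$. $\operatorname{cl}$ denotes closure and $\operatorname{conv}$ convex hull. *)

theory Defs
  imports "HOL-Analysis.Analysis"
begin

definition rec_cone :: "'a::real_vector set \<Rightarrow> 'a set" where
  "rec_cone K = {d. \<forall>x\<in>K. \<forall>t::real. t \<ge> 0 \<longrightarrow> x + t *\<^sub>R d \<in> K}"

definition scale_set :: "real \<Rightarrow> 'a::real_vector set \<Rightarrow> 'a set" where
  "scale_set l K = (if l > 0 then (\<lambda>k. l *\<^sub>R k) ` K else rec_cone K)"

end

theory Submission imports Defs "HOL-Real_Asymp.Real_Asymp" begin

definition persp :: "'a::euclidean_space \<Rightarrow> 'a \<Rightarrow> 'a" where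
  "persp a y = (1 / (a \<bullet> y)) *\<^sub>R y"

lemma persp_inner: "a \<bullet> y \<noteq> 0 \<Longrightarrow> a \<bullet> persp a y = 1"
  by (simp add: persp_def)

lemma hull_pos:
  assumes "\<forall>y\<in>F. a \<bullet> y > (e::real)"
  shows "\<forall>y\<in>convex hull F. a \<bullet> y > e"
proof -
  have "convex hull F \<subseteq> {y. a \<bullet> y > e}"
    by (rule hull_minimal) (use assms convex_halfspace_gt in auto)
  then show ?thesis by auto
qed

lemma conv_persp:
  fixes F :: "'a::euclidean_space set"
  assumes pos: "\<forall>y\<in>F. a \<bullet> y > 0"
  shows "convex hull (persp a ` F) = persp a ` (convex hull F)"
proof
  have posC: "\<forall>y\<in>convex hull F. a \<bullet> y > 0" using hull_pos[OF pos] .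
  have cv: "convex (persp a ` (convex hull F))"
  proof (rule convexI)
    fix x y and u v :: real
    assume x: "x \<in> persp a ` (convex hull F)" and y: "y \<in> persp a ` (convex hull F)"
      and uv: "0 \<le> u" "0 \<le> v" "u + v = 1"
    obtain p where p: "p \<in> convex hull F" "x = persp a p" using x by auto
    obtain q where q: "q \<in> convex hull F" "y = persp a q" using y by auto
    have ap: "a \<bullet> p > 0" and aq: "a \<bullet> q > 0" using posC p q by auto
    define c where "c = u / (a \<bullet> p) + v / (a \<bullet> q)"
    have c: "c > 0"
    proof (cases "u = 0")
      case True then have "v = 1" using uv by simp
      then show ?thesis using True aq by (simp add: c_def)
    next
      case False then have "u > 0" using uv by simp
      then have "u / (a \<bullet> p) > 0" using ap by simp
      moreover have "v / (a \<bullet> q) \<ge> 0" using uv aq by simp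
      ultimately show ?thesis by (simp add: c_def)
    qed
    define w where "w = (u / (a \<bullet> p) / c) *\<^sub>R p + (v / (a \<bullet> q) / c) *\<^sub>R q"
    have "w \<in> convex hull F"
    proof -
      have "u / (a \<bullet> p) / c + v / (a \<bullet> q) / c = (u / (a \<bullet> p) + v / (a \<bullet> q)) / c"
        by (simp add: add_divide_distrib)
      also have "\<dots> = 1" using c by (simp add: c_def)
      finally show ?thesis unfolding w_def
        by (intro convexD[OF convex_convex_hull p(1) q(1)]) (use uv ap aq c in auto)
    qed
    moreover have aw: "a \<bullet> w = 1 / c"
    proof -
      have "a \<bullet> w = (u / (a \<bullet> p) / c) * (a \<bullet> p) + (v / (a \<bullet> q) / c) * (a \<bullet> q)"
        by (simp add: w_def inner_add_right)
      also have "\<dots> = (u + v) / c" using ap aq by (simp add: add_divide_distrib)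
      finally show ?thesis using uv by simp
    qed
    moreover have "persp a w = u *\<^sub>R x + v *\<^sub>R y"
      using aw ap aq c by (simp add: persp_def p q w_def scaleR_add_right)
    ultimately show "u *\<^sub>R x + v *\<^sub>R y \<in> persp a ` (convex hull F)" by (metis image_eqI)
  qed
  show "convex hull (persp a ` F) \<subseteq> persp a ` (convex hull F)"
    by (rule hull_minimal[where S=convex, OF _ cv]) (auto intro: hull_inc)
next
  let ?S = "{y. a \<bullet> y > 0 \<and> persp a y \<in> convex hull (persp a ` F)}"
  have cv: "convex ?S"
  proof (rule convexI)
    fix p q and u v :: real
    assume p: "p \<in> ?S" and q: "q \<in> ?S" and uv: "0 \<le> u" "0 \<le> v" "u + v = 1"
    have ap: "a \<bullet> p > 0" and aq: "a \<bullet> q > 0" using p q by auto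
    define w where "w = u *\<^sub>R p + v *\<^sub>R q"
    have aw: "a \<bullet> w > 0"
    proof (cases "u = 0")
      case True then have "v = 1" using uv by simp
      then show ?thesis using True aq by (simp add: w_def)
    next
      case False then have "u > 0" using uv by simp
      then have "u * (a \<bullet> p) > 0" using ap by simp
      moreover have "v * (a \<bullet> q) \<ge> 0" using uv aq by simp
      ultimately show ?thesis by (simp add: w_def inner_add_right)
    qed
    have eq: "persp a w = (u * (a \<bullet> p) / (a \<bullet> w)) *\<^sub>R persp a p + (v * (a \<bullet> q) / (a \<bullet> w)) *\<^sub>R persp a q"
      using ap aq aw by (simp add: persp_def w_def scaleR_add_right)
    have "persp a w \<in> convex hull (persp a ` F)"
      unfolding eq
      by (rule convexD[OF convex_convex_hull]) (use p q uv ap aq aw in \<open>auto simp: add_divide_distrib[symmetric] w_def inner_add_right\<close>)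
    then show "u *\<^sub>R p + v *\<^sub>R q \<in> ?S" using aw w_def by auto
  qed
  have "convex hull F \<subseteq> ?S"
    by (rule hull_minimal[where S=convex, OF _ cv]) (use pos in \<open>auto intro: hull_inc\<close>)
  then show "persp a ` (convex hull F) \<subseteq> convex hull (persp a ` F)" by auto
qed

lemma rec_cone_bounded:
  fixes K :: "'a::real_normed_vector set"
  assumes "bounded K" "K \<noteq> {}" "d \<in> rec_cone K"
  shows "d = 0"
proof (rule ccontr)
  assume d: "d \<noteq> 0"
  obtain B where B: "\<forall>x\<in>K. norm x \<le> B" using assms(1) bounded_iff by auto
  obtain x where x: "x \<in> K" using assms(2) by auto
  define t where "t = (B + norm x + 1) / norm d"
  have nd: "norm d > 0" using d by simp
  have "B \<ge> 0" using B x norm_ge_zero order_trans by blast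
  then have t: "t \<ge> 0" using nd by (simp add: t_def)
  have "x + t *\<^sub>R d \<in> K" using assms(3) x t by (auto simp: rec_cone_def)
  then have "norm (x + t *\<^sub>R d) \<le> B" using B by auto
  moreover have "norm (t *\<^sub>R d) = B + norm x + 1" using nd t \<open>B \<ge> 0\<close> by (simp add: t_def)
  moreover have "norm (t *\<^sub>R d) \<le> norm (x + t *\<^sub>R d) + norm x"
    by (metis add_diff_cancel_left' norm_triangle_ineq4 add.commute)
  ultimately show False by linarith
qed

lemma part1:
  fixes F :: "'a::euclidean_space set"
  assumes ne: "F \<noteq> {}" and pos: "\<forall>y\<in>F. a \<bullet> y > 0" and bd: "bounded F"
  shows "convex hull (persp a ` F) = {g. \<exists>\<rho>\<ge>0. g \<in> scale_set \<rho> (convex hull F) \<and> a \<bullet> g = 1}"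
proof -
  have posC: "\<forall>y\<in>convex hull F. a \<bullet> y > 0" using hull_pos[OF pos] .
  have bdC: "bounded (convex hull F)" using bd bounded_convex_hull by blast
  have neC: "convex hull F \<noteq> {}" using ne by simp
  have "persp a ` (convex hull F) = {g. \<exists>\<rho>\<ge>0. g \<in> scale_set \<rho> (convex hull F) \<and> a \<bullet> g = 1}"
  proof safe
    fix y assume y: "y \<in> convex hull F"
    have ay: "a \<bullet> y > 0" using posC y by auto
    show "\<exists>\<rho>\<ge>0. persp a y \<in> scale_set \<rho> (convex hull F) \<and> a \<bullet> persp a y = 1"
      by (rule exI[of _ "1 / (a \<bullet> y)"]) (use ay y in \<open>auto simp: scale_set_def persp_def\<close>)
  next
    fix g \<rho> assume r: "0 \<le> \<rho>" and g: "g \<in> scale_set \<rho> (convex hull F)" and ag: "a \<bullet> g = 1"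
    show "g \<in> persp a ` (convex hull F)"
    proof (cases "\<rho> > 0")
      case True
      then obtain y where y: "y \<in> convex hull F" "g = \<rho> *\<^sub>R y" using g by (auto simp: scale_set_def)
      have "\<rho> * (a \<bullet> y) = 1" using ag y by simp
      then have "\<rho> = 1 / (a \<bullet> y)" by (metis mult_zero_right nonzero_eq_divide_eq zero_neq_one)
      then have "g = persp a y" using y by (simp add: persp_def)
      then show ?thesis using y by auto
    next
      case False
      then have "g \<in> rec_cone (convex hull F)" using g by (simp add: scale_set_def)
      then have "g = 0" using rec_cone_bounded bdC neC by blast
      then show ?thesis using ag by simp
    qed
  qed
  then show ?thesis using conv_persp[OF pos] by simp
qed

lemma persp_bounded:
  fixes F :: "'a::euclidean_space set"
  assumes pos: "\<forall>y\<in>F. a \<bullet> y > e" and e: "e > 0" and bd: "bounded F"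
  shows "bounded (persp a ` F)"
proof -
  obtain B where B: "\<forall>x\<in>F. norm x \<le> B" using bd bounded_iff by auto
  have "norm (persp a y) \<le> B / e" if y: "y \<in> F" for y
  proof -
    have ay: "a \<bullet> y > e" using pos y by auto
    have "norm (persp a y) = norm y / (a \<bullet> y)" using ay e by (simp add: persp_def)
    also have "\<dots> \<le> norm y / e" using ay e by (simp add: frac_le)
    also have "\<dots> \<le> B / e" using B y e by (simp add: divide_right_mono)
    finally show ?thesis .
  qed
  then show ?thesis unfolding bounded_iff by auto
qed

lemma part2:
  fixes F :: "(real^'m) set"
  assumes ne: "F \<noteq> {}" and pos: "\<forall>y\<in>F. a \<bullet> y > e" and e: "e > 0" and bd: "bounded F"
    and one: "\<forall>y\<in>F. y $ k1 = 1"
  shows "convex hull F = {h. \<exists>\<sigma>\<ge>0. h \<in> scale_set \<sigma> (convex hull (persp a ` F)) \<and> h $ k1 = 1}"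
proof -
  have pos0: "\<forall>y\<in>F. a \<bullet> y > 0" using pos e by force
  have posC: "\<forall>y\<in>convex hull F. a \<bullet> y > 0" using hull_pos[OF pos0] .
  have eqG: "convex hull (persp a ` F) = persp a ` (convex hull F)" using conv_persp[OF pos0] .
  have bdG: "bounded (convex hull (persp a ` F))"
    using persp_bounded[OF pos e bd] bounded_convex_hull by blast
  have neG: "convex hull (persp a ` F) \<noteq> {}" using ne by simp
  have cv1: "convex {h :: real^'m. h $ k1 = 1}"
    by (rule convexI) simp
  have oneC: "convex hull F \<subseteq> {h. h $ k1 = 1}"
    by (rule hull_minimal[where S=convex, OF _ cv1]) (use one in auto)
  show ?thesis
  proof safe
    fix h assume h: "h \<in> convex hull F"
    have ah: "a \<bullet> h > 0" using posC h by auto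
    have "h = (a \<bullet> h) *\<^sub>R persp a h" using ah by (simp add: persp_def)
    then have "h \<in> scale_set (a \<bullet> h) (convex hull (persp a ` F))"
      using ah h eqG by (auto simp: scale_set_def)
    then show "\<exists>\<sigma>\<ge>0. h \<in> scale_set \<sigma> (convex hull (persp a ` F)) \<and> h $ k1 = 1"
      using ah h oneC by (intro exI[of _ "a \<bullet> h"]) auto
  next
    fix h \<sigma> assume s: "0 \<le> \<sigma>" and h: "h \<in> scale_set \<sigma> (convex hull (persp a ` F))" and h1: "h $ k1 = 1"
    show "h \<in> convex hull F"
    proof (cases "\<sigma> > 0")
      case True
      then obtain y where y: "y \<in> convex hull F" "h = \<sigma> *\<^sub>R persp a y"
        using h eqG by (auto simp: scale_set_def)
      have ay: "a \<bullet> y > 0" using posC y by auto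
      have y1: "y $ k1 = 1" using oneC y by auto
      have "\<sigma> / (a \<bullet> y) = 1" using h1 y y1 by (simp add: persp_def)
      then have "h = y" using y by (simp add: persp_def)
      then show ?thesis using y by simp
    next
      case False
      then have "h \<in> rec_cone (convex hull (persp a ` F))" using h by (simp add: scale_set_def)
      then have "h = 0" using rec_cone_bounded bdG neG by blast
      then show ?thesis using h1 by simp
    qed
  qed
qed


lemma part3:
  fixes F :: "'a::euclidean_space set"
  assumes ne: "F \<noteq> {}" and pos: "\<forall>y\<in>F. a \<bullet> y > e" and e: "e > 0"
  shows "closure (convex hull (persp a ` F)) = {g. \<exists>\<rho>\<ge>0. g \<in> scale_set \<rho> (closure (convex hull F)) \<and> a \<bullet> g = 1}"
proof -
  define C where "C = closure (convex hull F)"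
  have pos0: "\<forall>y\<in>F. a \<bullet> y > 0" using pos e by force
  have posC: "\<forall>y\<in>convex hull F. a \<bullet> y > e" using hull_pos[OF pos] .
  have eqG: "convex hull (persp a ` F) = persp a ` (convex hull F)" using conv_persp[OF pos0] .
  have "convex hull F \<subseteq> {y. a \<bullet> y \<ge> e}" using posC by auto
  then have "C \<subseteq> {y. a \<bullet> y \<ge> e}" unfolding C_def
    by (rule closure_minimal) (rule closed_halfspace_ge)
  then have geC: "\<forall>y\<in>C. a \<bullet> y \<ge> e" by auto
  have "persp a ` (convex hull F) \<subseteq> {g. a \<bullet> g = 1}"
    using posC e by (force intro: persp_inner)
  then have H: "closure (convex hull (persp a ` F)) \<subseteq> {g. a \<bullet> g = 1}"
    unfolding eqG by (rule closure_minimal) (rule closed_hyperplane)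
  have cont: "continuous_on C (persp a)"
  proof -
    have "\<forall>y\<in>C. a \<bullet> y \<noteq> 0" using geC e by force
    then show ?thesis unfolding persp_def by (auto intro!: continuous_intros)
  qed
  have imC: "persp a ` C \<subseteq> closure (convex hull (persp a ` F))"
    unfolding C_def
    by (rule image_closure_subset) (use cont eqG closure_subset in \<open>auto simp: C_def\<close>)
  have cvC: "convex C" unfolding C_def by (simp add: convex_closure)
  have clC: "closed C" unfolding C_def by simp
  have subC: "convex hull F \<subseteq> C" unfolding C_def by (rule closure_subset)
  show ?thesis
    unfolding C_def[symmetric]
  proof safe
    fix g assume g: "g \<in> closure (convex hull (persp a ` F))"
    have ag: "a \<bullet> g = 1" using H g by auto
    obtain z where z: "\<forall>n. z n \<in> persp a ` (convex hull F)" "z \<longlonglongrightarrow> g"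
      using g unfolding eqG closure_sequential by blast
    have ex: "\<forall>n. \<exists>yy. yy \<in> convex hull F \<and> z n = persp a yy" using z(1) by blast
    obtain y where y: "\<forall>n. y n \<in> convex hull F \<and> z n = persp a (y n)"
      using choice[OF ex] by blast
    define u where "u n = 1 / (a \<bullet> y n)" for n
    have ayn: "a \<bullet> y n > e" for n using y posC by blast
    have upos: "u n > 0" for n using ayn[of n] e unfolding u_def by simp
    have uin: "u n \<in> {0..1/e}" for n
    proof -
      have "a \<bullet> y n > e" using y posC by auto
      then have "u n \<le> 1 / e" unfolding u_def using e by (simp add: frac_le)
      then show ?thesis using upos[of n] by auto
    qed
    have zu: "z n = u n *\<^sub>R y n" for n using y by (simp add: u_def persp_def)
    have uin': "\<forall>n. u n \<in> {0..1/e}" using uin by blast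
    obtain l r where l: "l \<in> {0..1/e}" and r: "strict_mono r" and ul0: "(u \<circ> r) \<longlonglongrightarrow> l"
      by (rule seq_compactE[OF compact_imp_seq_compact[OF compact_Icc] uin'])
    have ul: "(\<lambda>k. u (r k)) \<longlonglongrightarrow> l" using ul0 by (simp add: comp_def)
    have zr0: "(z \<circ> r) \<longlonglongrightarrow> g" using z(2) r by (rule LIMSEQ_subseq_LIMSEQ)
    have zr: "(\<lambda>k. z (r k)) \<longlonglongrightarrow> g" using zr0 by (simp add: comp_def)
    show "\<exists>\<rho>\<ge>0. g \<in> scale_set \<rho> C \<and> a \<bullet> g = 1"
    proof (cases "l > 0")
      case True
      have lim: "(\<lambda>k. (1 / u (r k)) *\<^sub>R z (r k)) \<longlonglongrightarrow> (1 / l) *\<^sub>R g"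
        using tendsto_scaleR[OF tendsto_divide[OF tendsto_const ul] zr] True by simp
      have mem: "(1 / u (r k)) *\<^sub>R z (r k) \<in> C" for k
      proof -
        have "(1 / u (r k)) *\<^sub>R z (r k) = y (r k)" using zu[of "r k"] upos[of "r k"] by simp
        moreover have "y (r k) \<in> C" using y subC by blast
        ultimately show ?thesis by simp
      qed
      have gC: "(1 / l) *\<^sub>R g \<in> C" using closed_sequentially[OF clC mem lim] .
      have geq: "g = l *\<^sub>R ((1 / l) *\<^sub>R g)" using True by simp
      have "g \<in> (\<lambda>k. l *\<^sub>R k) ` C" by (rule image_eqI[where f="\<lambda>k. l *\<^sub>R k", OF geq gC])
      then have "g \<in> scale_set l C" using True unfolding scale_set_def by simp
      then show ?thesis using True ag by (intro exI[of _ l]) simp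
    next
      case False
      then have l0: "l = 0" using l by auto
      have "g \<in> rec_cone C" unfolding rec_cone_def
      proof safe
        fix x and t :: real assume x: "x \<in> C" and t: "0 \<le> t"
        define w where "w k = (1 - t * u (r k)) *\<^sub>R x + t *\<^sub>R z (r k)" for k
        have "w \<longlonglongrightarrow> (1 - t * l) *\<^sub>R x + t *\<^sub>R g"
          unfolding w_def
          by (rule tendsto_add[OF tendsto_scaleR[OF tendsto_diff[OF tendsto_const tendsto_mult[OF tendsto_const ul]] tendsto_const] tendsto_scaleR[OF tendsto_const zr]])
        then have wl: "w \<longlonglongrightarrow> x + t *\<^sub>R g" using l0 by simp
        have "eventually (\<lambda>k. u (r k) < 1 / (t + 1)) sequentially"
          using order_tendstoD(2)[OF ul, of "1 / (t + 1)"] l0 t by simp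
        then have "eventually (\<lambda>k. w k \<in> C) sequentially"
        proof (rule eventually_mono)
          fix k assume k: "u (r k) < 1 / (t + 1)"
          have "t * u (r k) \<le> t * (1 / (t + 1))" using k t by (intro mult_left_mono) auto
          also have "\<dots> \<le> 1" using t by (simp add: field_simps)
          finally have le1: "t * u (r k) \<le> 1" .
          have ge0: "0 \<le> t * u (r k)" using t upos[of "r k"] by simp
          have "w k = (1 - t * u (r k)) *\<^sub>R x + (t * u (r k)) *\<^sub>R y (r k)"
            unfolding w_def using zu[of "r k"] by simp
          also have "\<dots> \<in> C"
            by (rule convexD[OF cvC x]) (use y subC le1 ge0 in auto)
          finally show "w k \<in> C" .
        qed
        then show "x + t *\<^sub>R g \<in> C"
          using Lim_in_closed_set[OF clC _ _ wl] by simp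
      qed
      then have "g \<in> scale_set 0 C" by (simp add: scale_set_def)
      then show ?thesis using ag by (intro exI[of _ 0]) simp
    qed
  next
    fix g \<rho> assume r: "0 \<le> \<rho>" and g: "g \<in> scale_set \<rho> C" and ag: "a \<bullet> g = 1"
    show "g \<in> closure (convex hull (persp a ` F))"
    proof (cases "\<rho> > 0")
      case True
      then obtain y where y: "y \<in> C" "g = \<rho> *\<^sub>R y" using g by (auto simp: scale_set_def)
      have "\<rho> * (a \<bullet> y) = 1" using ag y by simp
      then have "\<rho> = 1 / (a \<bullet> y)" by (metis mult_zero_right nonzero_eq_divide_eq zero_neq_one)
      then have "g = persp a y" using y by (simp add: persp_def)
      then show ?thesis using y imC by auto
    next
      case False
      then have gr: "g \<in> rec_cone C" using g by (simp add: scale_set_def)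
      obtain y0 where y0: "y0 \<in> F" using ne by auto
      have y0C: "y0 \<in> C" using y0 subC hull_inc[of y0 F] by auto
      define c where "c = a \<bullet> y0"
      have c: "c > 0" using y0 pos0 by (auto simp: c_def)
      define z where "z n = persp a (y0 + real n *\<^sub>R g)" for n
      have zin: "z n \<in> closure (convex hull (persp a ` F))" for n
      proof -
        have "y0 + real n *\<^sub>R g \<in> C" using gr y0C by (auto simp: rec_cone_def)
        then show ?thesis using imC by (auto simp: z_def)
      qed
      have zeq: "z n = (1 / (c + real n)) *\<^sub>R y0 + (real n / (c + real n)) *\<^sub>R g" for n
        using ag by (simp add: z_def persp_def c_def inner_add_right scaleR_add_right)
      have l1: "(\<lambda>n. 1 / (c + real n)) \<longlonglongrightarrow> 0" using c by real_asymp
      have l2: "(\<lambda>n. real n / (c + real n)) \<longlonglongrightarrow> 1" using c by real_asymp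
      have "z \<longlonglongrightarrow> 0 *\<^sub>R y0 + 1 *\<^sub>R g"
        unfolding zeq by (intro tendsto_intros l1 l2)
      then have "z \<longlonglongrightarrow> g" by simp
      then show ?thesis by (rule closed_sequentially[OF closed_closure zin])
    qed
  qed
qed


lemma sum_inner: "(\<Sum>i\<in>UNIV. \<alpha> $ i * v $ i) = (\<alpha>::real^'m) \<bullet> v"
  by (simp add: inner_vec_def)

theorem theorem2:
  fixes X :: "(real^'n) set" and f :: "real^'n \<Rightarrow> real^'m" and \<alpha> :: "real^'m"
    and k1 :: 'm and \<epsilon> :: real
  assumes F_ne: "f ` X \<noteq> {}"
    and G_ne: "(\<lambda>x. (1 / (\<Sum>i\<in>UNIV. \<alpha> $ i * f x $ i)) *\<^sub>R f x) ` X \<noteq> {}"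
    and eps: "\<epsilon> > 0" "\<forall>x\<in>X. (\<Sum>i\<in>UNIV. \<alpha> $ i * f x $ i) > \<epsilon>"
  shows
    "(bounded (f ` X) \<longrightarrow>
        convex hull ((\<lambda>x. (1 / (\<Sum>i\<in>UNIV. \<alpha> $ i * f x $ i)) *\<^sub>R f x) ` X)
        = {g. \<exists>\<rho>\<ge>0. g \<in> scale_set \<rho> (convex hull (f ` X)) \<and> \<alpha> \<bullet> g = 1})
     \<and> (bounded (f ` X) \<and> (\<forall>x\<in>X. f x $ k1 = 1) \<longrightarrow>
        convex hull (f ` X)
        = {h. \<exists>\<sigma>\<ge>0. h \<in> scale_set \<sigma>
                 (convex hull ((\<lambda>x. (1 / (\<Sum>i\<in>UNIV. \<alpha> $ i * f x $ i)) *\<^sub>R f x) ` X))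
               \<and> h $ k1 = 1})
     \<and> (closure (convex hull ((\<lambda>x. (1 / (\<Sum>i\<in>UNIV. \<alpha> $ i * f x $ i)) *\<^sub>R f x) ` X))
        = {g. \<exists>\<rho>\<ge>0. g \<in> scale_set \<rho> (closure (convex hull (f ` X))) \<and> \<alpha> \<bullet> g = 1})"
proof -
  have img: "(\<lambda>x. (1 / (\<Sum>i\<in>UNIV. \<alpha> $ i * f x $ i)) *\<^sub>R f x) ` X = persp \<alpha> ` (f ` X)"
    by (simp add: sum_inner image_image persp_def)
  have pos: "\<forall>y\<in>f ` X. \<alpha> \<bullet> y > \<epsilon>" using eps(2) by (simp add: sum_inner)
  have pos0: "\<forall>y\<in>f ` X. \<alpha> \<bullet> y > 0" using pos eps(1) by force
  have one: "(\<forall>x\<in>X. f x $ k1 = 1) \<Longrightarrow> \<forall>y\<in>f ` X. y $ k1 = 1" by auto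
  show ?thesis
    unfolding img
    using part1[OF F_ne pos0] part2[OF F_ne pos eps(1), of k1] one part3[OF F_ne pos eps(1)]
    by blast
qed

end
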